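(* For every integer $t\ge 0$: $m_2^{(1)}(3,3t+2)=15t+8$, $m_2^{(1)}(3,3t+3)=15t+15$, and $m_2^{(1)}(3,3t+4)=15t+16$.
   Context: For a prime power $q$ and $N\ge1$, a multiset of points in $\mathrm{PG}(N,q)$ is a map $\mathcal{K}$ from the points to $\mathbb{Z}_{\ge0}$, with $\mathcal{K}(S)=\sum_{P\in S}\mathcal{K}(P)$; its cardinality is $\mathcal{K}(\mathrm{PG}(N,q))$. Dimensions are projective (lines have dimension 1). For $0\le r\le N-1$ and a positive integer $w$, $m_q^{(r)}(N,w)$ is the maximum cardinality of a multiset of points in $\mathrm{PG}(N,q)$ such that every $r$-dimensional subspace has multiplicity at most $w$. *)

theory Defs
  imports Main
begin

text \<open>Vectors of F^(N+1) are functions nat \<Rightarrow> 'a vanishing outside {0..N}.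
  A point is a 1-dimensional linear subspace (represented as the set of its vectors).\<close>

definition pg_vecs :: "nat \<Rightarrow> (nat \<Rightarrow> 'a::field) set" where
  "pg_vecs N = {v. \<forall>i>N. v i = 0}"

definition pg_points :: "nat \<Rightarrow> (nat \<Rightarrow> 'a::field) set set" where
  "pg_points N = {{(\<lambda>i. c * v i) | c. True} | v. v \<in> pg_vecs N \<and> v \<noteq> (\<lambda>i. 0)}"

definition lin_comb :: "(nat \<Rightarrow> 'a::field) list \<Rightarrow> (nat \<Rightarrow> 'a) \<Rightarrow> (nat \<Rightarrow> 'a)" where
  "lin_comb vs c = (\<lambda>i. \<Sum>j<length vs. c j * (vs ! j) i)"

definition lin_span :: "(nat \<Rightarrow> 'a::field) list \<Rightarrow> (nat \<Rightarrow> 'a) set" where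
  "lin_span vs = {lin_comb vs c | c. True}"

definition lin_indep :: "(nat \<Rightarrow> 'a::field) list \<Rightarrow> bool" where
  "lin_indep vs \<longleftrightarrow> (\<forall>c. lin_comb vs c = (\<lambda>i. 0) \<longrightarrow> (\<forall>j<length vs. c j = 0))"

definition pg_subspaces :: "nat \<Rightarrow> nat \<Rightarrow> (nat \<Rightarrow> 'a::field) set set set" where
  "pg_subspaces N r = {{P \<in> pg_points N. P \<subseteq> lin_span vs} | vs.
      length vs = r + 1 \<and> set vs \<subseteq> pg_vecs N \<and> lin_indep vs}"

text \<open>A multiset of points is K :: point \<Rightarrow> nat (values off the point set are irrelevant).
  m_F^{(r)}(N,w): maximum cardinality of a multiset with every r-space of multiplicity \<le> w.\<close>
definition pg_m :: "'a::{field,finite} itself \<Rightarrow> nat \<Rightarrow> nat \<Rightarrow> nat \<Rightarrow> nat" where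
  "pg_m _ N r w = Max {(\<Sum>P\<in>(pg_points N :: (nat \<Rightarrow> 'a) set set). K P) | K.
      \<forall>S\<in>(pg_subspaces N r :: (nat \<Rightarrow> 'a) set set set). (\<Sum>P\<in>S. K P) \<le> w}"

end

theory Submission imports Defs begin

definition pt :: "(nat \<Rightarrow> 'a::field) \<Rightarrow> (nat \<Rightarrow> 'a) set" where
  "pt v = {(\<lambda>i. c * v i) | c. True}"
definition vadd :: "(nat \<Rightarrow> 'a::field) \<Rightarrow> (nat \<Rightarrow> 'a) \<Rightarrow> (nat \<Rightarrow> 'a)" where
  "vadd a b = (\<lambda>i. a i + b i)"
definition VV :: "(nat \<Rightarrow> 'a::field) set" where
  "VV = pg_vecs 3 - {(\<lambda>i. 0)}"
definition chi :: "nat set \<Rightarrow> (nat \<Rightarrow> 'a::field)" where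
  "chi S = (\<lambda>i. if i \<in> S then 1 else 0)"

context
  assumes card2: "card (UNIV :: 'a::{field,finite} set) = 2"
begin

lemma two_elems: "(x::'a) = 0 \<or> x = 1"
proof -
  have "card {0::'a,1} = 2" by simp
  hence "{0::'a,1} = UNIV" using card2 by (metis card_subset_eq finite_UNIV subset_UNIV)
  thus ?thesis by auto
qed

lemma one_one: "(1::'a) + 1 = 0"
proof -
  have "1+1 = (0::'a) \<or> 1+1 = (1::'a)" by (rule two_elems)
  moreover have "1+1 \<noteq> (1::'a)" by (metis add_cancel_left_right one_neq_zero)
  ultimately show ?thesis by blast
qed

lemma xx: "(x::'a) + x = 0"
proof -
  have "x + x = x * (1+1)" by (simp only: distrib_left mult_1_right)
  also have "\<dots> = 0" by (simp only: one_one mult_zero_right)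
  finally show ?thesis .
qed

lemma pt_eq: "pt (v::nat \<Rightarrow> 'a) = {(\<lambda>i. 0), v}"
proof
  show "pt v \<subseteq> {(\<lambda>i. 0), v}" unfolding pt_def using two_elems by fastforce
  have "(\<lambda>i. 0) \<in> pt v" unfolding pt_def by (auto intro!: exI[of _ 0])
  moreover have "v \<in> pt v" unfolding pt_def by (auto intro!: exI[of _ 1])
  ultimately show "{(\<lambda>i. 0), v} \<subseteq> pt v" by auto
qed

lemma pt_inj: "inj_on (pt :: _ \<Rightarrow> (nat \<Rightarrow> 'a) set) VV"
  unfolding inj_on_def VV_def pt_eq by (auto simp: doubleton_eq_iff)

lemma pt_ne: "(u::nat\<Rightarrow>'a) \<in> VV \<Longrightarrow> v \<in> VV \<Longrightarrow> u \<noteq> v \<Longrightarrow> pt u \<noteq> pt v"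
  using pt_inj unfolding inj_on_def by blast

lemma points_eq: "pg_points 3 = (pt ` VV :: (nat \<Rightarrow> 'a) set set)"
  unfolding pg_points_def VV_def pt_def by auto

lemma sum_points: "(\<Sum>P\<in>(pg_points 3 :: (nat \<Rightarrow> 'a) set set). K P) = (\<Sum>v\<in>VV. K (pt v))"
  unfolding points_eq by (rule sum.reindex[OF pt_inj, unfolded comp_def])

lemma comb2: "lin_comb [a, b] c = (\<lambda>i. c 0 * a i + c 1 * (b i :: 'a))"
  unfolding lin_comb_def by (simp add: numeral_2_eq_2)

lemma in_span: "lin_comb vs c \<in> lin_span vs"
  unfolding lin_span_def by blast

lemma span2: "lin_span [a, b] = {(\<lambda>i. 0), a, b, vadd a (b :: nat \<Rightarrow> 'a)}"
proof
  show "lin_span [a, b] \<subseteq> {(\<lambda>i. 0), a, b, vadd a b}"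
  proof
    fix x assume "x \<in> lin_span [a, b]"
    then obtain c where x: "x = lin_comb [a,b] c" unfolding lin_span_def by auto
    have x': "x = (\<lambda>i. c 0 * a i + c 1 * b i)" unfolding x comb2 ..
    consider "c 0 = 0" "c 1 = 0" | "c 0 = 1" "c 1 = 0" | "c 0 = 0" "c 1 = 1" | "c 0 = 1" "c 1 = 1"
      using two_elems[of "c 0"] two_elems[of "c 1"] by blast
    then show "x \<in> {(\<lambda>i. 0), a, b, vadd a b}"
    proof cases
      case 1 then have "x = (\<lambda>i. 0)" unfolding x' by simp
      then show ?thesis by simp
    next
      case 2 then have "x = a" unfolding x' by simp
      then show ?thesis by simp
    next
      case 3 then have "x = b" unfolding x' by simp
      then show ?thesis by simp
    next
      case 4 then have "x = vadd a b" unfolding x' vadd_def by simp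
      then show ?thesis by simp
    qed
  qed
  have "lin_comb [a,b] (\<lambda>_. 0) = (\<lambda>i. 0)" by (simp add: comb2)
  moreover have "lin_comb [a,b] (\<lambda>j. if j = 0 then 1 else 0) = a" by (simp add: comb2)
  moreover have "lin_comb [a,b] (\<lambda>j. if j = 1 then 1 else 0) = b" by (simp add: comb2)
  moreover have "lin_comb [a,b] (\<lambda>_. 1) = vadd a b" by (simp add: comb2 vadd_def)
  ultimately show "{(\<lambda>i. 0), a, b, vadd a b} \<subseteq> lin_span [a, b]"
    using in_span[of "[a,b]"] by (metis empty_subsetI insert_subset)
qed

lemma vadd_zero: "vadd a b = (\<lambda>i. 0) \<Longrightarrow> a = (b :: nat \<Rightarrow> 'a)"
proof
  fix i assume "vadd a b = (\<lambda>i. 0)"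
  hence "a i + b i = 0" unfolding vadd_def by meson
  hence "a i = - b i" by (simp add: eq_neg_iff_add_eq_0)
  also have "- b i = b i" using xx[of "b i"] by (simp add: neg_eq_iff_add_eq_0)
  finally show "a i = b i" .
qed

lemma indep2:
  assumes "a \<in> VV" "b \<in> VV" "a \<noteq> (b :: nat \<Rightarrow> 'a)"
  shows "lin_indep [a, b]"
  unfolding lin_indep_def
proof (intro allI impI)
  fix c j assume h: "lin_comb [a,b] c = (\<lambda>i. 0)" and j: "j < length [a,b]"
  have an: "a \<noteq> (\<lambda>i. 0)" and bn: "b \<noteq> (\<lambda>i. 0)" using assms unfolding VV_def by auto
  have "c 0 = 0 \<and> c 1 = 0"
  proof (cases "c 0 = 0")
    case True
    then show ?thesis using h bn two_elems[of "c 1"] unfolding comb2 by auto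
  next
    case False
    hence c0: "c 0 = 1" using two_elems by blast
    show ?thesis
    proof (cases "c 1 = 0")
      case True
      then show ?thesis using h an c0 unfolding comb2 by auto
    next
      case False
      hence "c 1 = 1" using two_elems by blast
      hence "vadd a b = (\<lambda>i. 0)" using h c0 unfolding comb2 vadd_def by auto
      then show ?thesis using vadd_zero assms by blast
    qed
  qed
  moreover have "j = 0 \<or> j = 1" using j by auto
  ultimately show "c j = 0" by auto
qed

lemma indep2_conv:
  assumes "lin_indep [a, b :: nat \<Rightarrow> 'a]"
  shows "a \<noteq> (\<lambda>i. 0) \<and> b \<noteq> (\<lambda>i. 0) \<and> a \<noteq> b"
proof -
  have L: "\<And>c j. lin_comb [a,b] c = (\<lambda>i. 0) \<Longrightarrow> j < 2 \<Longrightarrow> c j = 0"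
    using assms unfolding lin_indep_def by simp
  show ?thesis
  proof (intro conjI notI)
    assume "a = (\<lambda>i. 0)"
    hence "lin_comb [a,b] (\<lambda>j. if j = 0 then 1 else 0) = (\<lambda>i. 0)" by (simp add: comb2)
    from L[OF this, of 0] show False by simp
  next
    assume "b = (\<lambda>i. 0)"
    hence "lin_comb [a,b] (\<lambda>j. if j = 1 then 1 else 0) = (\<lambda>i. 0)" by (simp add: comb2)
    from L[OF this, of 1] show False by simp
  next
    assume "a = b"
    hence "lin_comb [a,b] (\<lambda>_. 1) = (\<lambda>i. 0)" by (simp add: comb2 xx)
    from L[OF this, of 0] show False by simp
  qed
qed

lemma vadd_VV:
  assumes "a \<in> VV" "b \<in> VV" "a \<noteq> (b :: nat \<Rightarrow> 'a)"
  shows "vadd a b \<in> VV" "vadd a b \<noteq> a" "vadd a b \<noteq> b"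
proof -
  have "vadd a b \<noteq> (\<lambda>i. 0)" using vadd_zero assms(3) by blast
  moreover have "vadd a b \<in> pg_vecs 3" using assms(1,2) unfolding VV_def pg_vecs_def vadd_def by simp
  ultimately show "vadd a b \<in> VV" unfolding VV_def by simp
  show "vadd a b \<noteq> a"
  proof
    assume h: "vadd a b = a"
    have "b = (\<lambda>i. 0)"
    proof
      fix i have "a i + b i = a i" using fun_cong[OF h[unfolded vadd_def], of i] by simp
      thus "b i = 0" by simp
    qed
    thus False using assms unfolding VV_def by auto
  qed
  show "vadd a b \<noteq> b"
  proof
    assume h: "vadd a b = b"
    have "a = (\<lambda>i. 0)"
    proof
      fix i have "a i + b i = b i" using fun_cong[OF h[unfolded vadd_def], of i] by simp
      thus "a i = 0" by simp
    qed
    thus False using assms unfolding VV_def by auto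
  qed
qed

lemma line_eq:
  assumes "a \<in> VV" "b \<in> VV" "a \<noteq> (b :: nat \<Rightarrow> 'a)"
  shows "{P \<in> pg_points 3. P \<subseteq> lin_span [a,b]} = {pt a, pt b, pt (vadd a b)}"
  using vadd_VV[OF assms] assms unfolding points_eq span2
  by (auto simp: pt_eq VV_def)

lemma line_sum:
  assumes "a \<in> VV" "b \<in> VV" "a \<noteq> (b :: nat \<Rightarrow> 'a)"
  shows "(\<Sum>P\<in>{P \<in> pg_points 3. P \<subseteq> lin_span [a,b]}. K P) = K (pt a) + K (pt b) + K (pt (vadd a b))"
  unfolding line_eq[OF assms]
  using vadd_VV[OF assms] assms pt_ne by (simp add: add.assoc)

lemma sub_in:
  assumes "a \<in> VV" "b \<in> VV" "a \<noteq> (b :: nat \<Rightarrow> 'a)"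
  shows "{P \<in> pg_points 3. P \<subseteq> lin_span [a,b]} \<in> pg_subspaces 3 1"
  unfolding pg_subspaces_def using assms indep2[OF assms]
  by (auto simp: VV_def intro!: exI[of _ "[a,b]"])

lemma sub_cases:
  assumes "S \<in> (pg_subspaces 3 1 :: (nat \<Rightarrow> 'a) set set set)"
  obtains a b where "a \<in> VV" "b \<in> VV" "a \<noteq> b" "S = {P \<in> pg_points 3. P \<subseteq> lin_span [a,b]}"
proof -
  obtain vs where S: "S = {P \<in> pg_points 3. P \<subseteq> lin_span vs}" and l: "length vs = 2"
    and sv: "set vs \<subseteq> pg_vecs 3" and li: "lin_indep vs"
    using assms unfolding pg_subspaces_def by auto
  obtain a b where vs: "vs = [a,b]" using l
    by (metis One_nat_def Suc_1 length_0_conv length_Suc_conv)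
  show ?thesis using that[of a b] indep2_conv[of a b] li sv S unfolding vs VV_def by auto
qed

lemma chi_inj: "inj_on (chi :: nat set \<Rightarrow> nat \<Rightarrow> 'a) (Pow {0,1,2,3})"
proof (rule inj_onI)
  fix S T assume "(chi S :: nat \<Rightarrow> 'a) = chi T"
  hence h: "\<And>i. (chi S i :: 'a) = chi T i" by simp
  show "S = T"
  proof (rule set_eqI)
    fix x
    have "(if x \<in> S then (1::'a) else 0) = (if x \<in> T then 1 else 0)" using h[of x] unfolding chi_def .
    thus "x \<in> S \<longleftrightarrow> x \<in> T" by (cases "x \<in> S"; cases "x \<in> T") simp_all
  qed
qed

lemma VV_chi: "(VV :: (nat \<Rightarrow> 'a) set) = chi ` (Pow {0,1,2,3} - {{}})"
proof
  show "chi ` (Pow {0,1,2,3} - {{}}) \<subseteq> (VV :: (nat \<Rightarrow> 'a) set)"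
  proof
    fix v assume "v \<in> (chi ` (Pow {0,1,2,3} - {{}}) :: (nat \<Rightarrow> 'a) set)"
    then obtain S where S: "S \<subseteq> {0,1,2,3}" "S \<noteq> {}" and v: "v = chi S" by auto
    obtain j where "j \<in> S" using S by auto
    hence "v j \<noteq> 0" unfolding v chi_def by simp
    hence "v \<noteq> (\<lambda>i. 0)" by auto
    moreover have "v \<in> pg_vecs 3" unfolding pg_vecs_def v chi_def using S(1) by auto
    ultimately show "v \<in> VV" unfolding VV_def by auto
  qed
  show "(VV :: (nat \<Rightarrow> 'a) set) \<subseteq> chi ` (Pow {0,1,2,3} - {{}})"
  proof
    fix v :: "nat \<Rightarrow> 'a" assume v: "v \<in> VV"
    let ?S = "{i. i \<le> 3 \<and> v i \<noteq> 0}"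
    have "v = chi ?S"
    proof
      fix i show "v i = chi ?S i"
      proof (cases "i \<le> 3")
        case True
        then show ?thesis using two_elems[of "v i"] unfolding chi_def by auto
      next
        case False
        then have "v i = 0" using v unfolding VV_def pg_vecs_def by simp
        then show ?thesis using False unfolding chi_def by simp
      qed
    qed
    moreover have "?S \<noteq> {}"
    proof
      assume "?S = {}"
      have "v = (\<lambda>i. 0)"
      proof
        fix i show "v i = 0"
        proof (cases "i \<le> 3")
          case True
          then show ?thesis using \<open>?S = {}\<close> by blast
        next
          case False
          then show ?thesis using v unfolding VV_def pg_vecs_def by simp
        qed
      qed
      thus False using v unfolding VV_def by auto
    qed
    moreover have "?S \<subseteq> {0,1,2,3}" by auto
    ultimately show "v \<in> chi ` (Pow {0,1,2,3} - {{}})" by blast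
  qed
qed

lemma finVV: "finite (VV :: (nat \<Rightarrow> 'a) set)"
  unfolding VV_chi by simp

lemma c15: "card (Pow {0,1,2,3::nat} - {{}}) = 15" by (simp add: card_Pow)

lemma card15: "card (VV :: (nat \<Rightarrow> 'a) set) = 15"
  unfolding VV_chi using c15 card_image[OF inj_on_subset[OF chi_inj]] by (metis Diff_subset)

lemma c8: "(\<Sum>S\<in>Pow {0,1,2,3::nat} - {{}}. if (0::nat) \<in> S then 1 else (0::nat)) = 8"
proof -
  let ?A = "{1,2,3::nat}"
  have "(\<Sum>S\<in>Pow {0,1,2,3::nat} - {{}}. if (0::nat) \<in> S then 1 else (0::nat))
     = (\<Sum>S\<in>Pow {0,1,2,3::nat}. if (0::nat) \<in> S then 1 else (0::nat))"
    by (rule sum.mono_neutral_left) auto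
  also have "\<dots> = (\<Sum>S\<in>Pow ?A. if (0::nat) \<in> S then 1 else (0::nat)) + (\<Sum>S\<in>insert 0 ` Pow ?A. if (0::nat) \<in> S then 1 else (0::nat))"
    by (subst Pow_insert, rule sum.union_disjoint) auto
  also have "(\<Sum>S\<in>Pow ?A. if (0::nat) \<in> S then 1 else (0::nat)) = 0" by (rule sum.neutral) auto
  also have "(\<Sum>S\<in>insert 0 ` Pow ?A. if (0::nat) \<in> S then 1 else (0::nat)) = card (insert 0 ` Pow ?A)"
    unfolding card_eq_sum by (rule sum.cong) auto
  also have "card (insert 0 ` Pow ?A) = card (Pow ?A)"
    by (rule card_image) (unfold inj_on_def, intro ballI impI, rule insert_ident[THEN iffD1], auto)
  also have "card (Pow ?A) = 8" by (simp add: card_Pow)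
  finally show ?thesis by simp
qed

lemma sum8: "(\<Sum>v\<in>(VV :: (nat \<Rightarrow> 'a) set). if v 0 \<noteq> 0 then 1 else (0::nat)) = 8"
proof -
  have "(\<Sum>v\<in>(VV :: (nat \<Rightarrow> 'a) set). if v 0 \<noteq> 0 then 1 else (0::nat))
     = (\<Sum>S\<in>Pow {0,1,2,3::nat} - {{}}. if (chi S :: nat \<Rightarrow> 'a) 0 \<noteq> 0 then 1 else (0::nat))"
    unfolding VV_chi by (rule sum.reindex[OF inj_on_subset[OF chi_inj], unfolded comp_def]) auto
  also have "\<dots> = (\<Sum>S\<in>Pow {0,1,2,3::nat} - {{}}. if (0::nat) \<in> S then 1 else (0::nat))"
    by (rule sum.cong) (auto simp: chi_def)
  finally show ?thesis using c8 by simp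
qed

lemma vadd_vadd: "vadd v (vadd v u) = (u :: nat \<Rightarrow> 'a)"
proof
  fix i show "vadd v (vadd v u) i = u i"
    unfolding vadd_def using xx[of "v i"] by (simp add: add.assoc[symmetric])
qed

lemma ub:
  fixes K :: "(nat \<Rightarrow> 'a) set \<Rightarrow> nat"
  assumes H: "\<forall>S\<in>(pg_subspaces 3 1 :: (nat \<Rightarrow> 'a) set set set). (\<Sum>P\<in>S. K P) \<le> w"
    and v: "v \<in> VV"
  shows "6 * K (pt v) + (\<Sum>u\<in>VV. K (pt u)) \<le> 7 * w"
proof -
  let ?k = "\<lambda>u. K (pt u)"
  let ?W = "VV - {v}"
  have cW: "card ?W = 14" using card15 v finVV by simp
  have P: "\<forall>u\<in>?W. ?k v + ?k u + ?k (vadd v u) \<le> w"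
  proof
    fix u assume u: "u \<in> ?W"
    hence uv: "u \<in> VV" "v \<noteq> u" by auto
    show "?k v + ?k u + ?k (vadd v u) \<le> w"
      using H sub_in[OF v uv] line_sum[OF v uv, of K] by metis
  qed
  have "(\<Sum>u\<in>?W. ?k v + ?k u + ?k (vadd v u)) \<le> (\<Sum>u\<in>?W. w)" by (rule sum_mono) (use P in blast)
  also have "\<dots> = 14 * w" using cW by simp
  finally have A: "(\<Sum>u\<in>?W. ?k v + ?k u + ?k (vadd v u)) \<le> 14 * w" .
  have B: "(\<Sum>u\<in>?W. ?k v + ?k u + ?k (vadd v u)) = 14 * ?k v + sum ?k ?W + (\<Sum>u\<in>?W. ?k (vadd v u))"
    by (simp add: sum.distrib cW)
  have bij: "bij_betw (vadd v) ?W ?W"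
  proof (rule bij_betw_byWitness[where f'="vadd v"])
    show "\<forall>a\<in>?W. vadd v (vadd v a) = a" by (simp add: vadd_vadd)
    show "\<forall>a\<in>?W. vadd v (vadd v a) = a" by (simp add: vadd_vadd)
    show "vadd v ` ?W \<subseteq> ?W" using vadd_VV[OF v] by auto
    thus "vadd v ` ?W \<subseteq> ?W" .
  qed
  have C: "(\<Sum>u\<in>?W. ?k (vadd v u)) = sum ?k ?W"
    by (rule sum.reindex_bij_betw[OF bij])
  have D: "sum ?k VV = ?k v + sum ?k ?W" by (rule sum.remove[OF finVV v])
  show ?thesis using A B C D by linarith
qed

lemma ubound:
  fixes K :: "(nat \<Rightarrow> 'a) set \<Rightarrow> nat"
  assumes H: "\<forall>S\<in>(pg_subspaces 3 1 :: (nat \<Rightarrow> 'a) set set set). (\<Sum>P\<in>S. K P) \<le> w"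
    and c1: "7 * w < B + 1 + 6 * (c + 1)" and c2: "15 * c \<le> B"
  shows "(\<Sum>P\<in>(pg_points 3 :: (nat \<Rightarrow> 'a) set set). K P) \<le> B"
proof (rule ccontr)
  assume "\<not> ?thesis"
  hence n: "(\<Sum>u\<in>VV. K (pt u)) > B" unfolding sum_points by linarith
  have P: "\<forall>v\<in>VV. K (pt v) \<le> c"
  proof
    fix v assume "v \<in> (VV :: (nat \<Rightarrow> 'a) set)"
    from ub[OF H this] n c1 have "6 * K (pt v) < 6 * (c + 1)" by linarith
    thus "K (pt v) \<le> c" by simp
  qed
  have "(\<Sum>u\<in>VV. K (pt u)) \<le> (\<Sum>u\<in>(VV :: (nat \<Rightarrow> 'a) set). c)" by (rule sum_mono) (use P in blast)
  also have "\<dots> = 15 * c" using card15 by simp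
  finally show False using n c2 by linarith
qed

lemma pgm_eq:
  fixes K0 :: "(nat \<Rightarrow> 'a) set \<Rightarrow> nat"
  assumes U: "\<And>K :: (nat \<Rightarrow> 'a) set \<Rightarrow> nat. \<forall>S\<in>(pg_subspaces 3 1 :: (nat \<Rightarrow> 'a) set set set). (\<Sum>P\<in>S. K P) \<le> w
      \<Longrightarrow> (\<Sum>P\<in>(pg_points 3 :: (nat \<Rightarrow> 'a) set set). K P) \<le> B"
    and L1: "\<forall>S\<in>(pg_subspaces 3 1 :: (nat \<Rightarrow> 'a) set set set). (\<Sum>P\<in>S. K0 P) \<le> w"
    and L2: "(\<Sum>P\<in>(pg_points 3 :: (nat \<Rightarrow> 'a) set set). K0 P) = B"
  shows "pg_m TYPE('a) 3 1 w = B"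
  unfolding pg_m_def
proof (rule Max_eqI)
  show "finite {(\<Sum>P\<in>(pg_points 3 :: (nat \<Rightarrow> 'a) set set). K P) | K.
      \<forall>S\<in>(pg_subspaces 3 1 :: (nat \<Rightarrow> 'a) set set set). (\<Sum>P\<in>S. K P) \<le> w}"
  proof (rule finite_subset[of _ "{..B}"])
    show "{(\<Sum>P\<in>(pg_points 3 :: (nat \<Rightarrow> 'a) set set). K P) | K.
      \<forall>S\<in>(pg_subspaces 3 1 :: (nat \<Rightarrow> 'a) set set set). (\<Sum>P\<in>S. K P) \<le> w} \<subseteq> {..B}"
      using U by blast
  qed simp
  show "\<And>y. y \<in> {(\<Sum>P\<in>(pg_points 3 :: (nat \<Rightarrow> 'a) set set). K P) | K.
      \<forall>S\<in>(pg_subspaces 3 1 :: (nat \<Rightarrow> 'a) set set set). (\<Sum>P\<in>S. K P) \<le> w} \<Longrightarrow> y \<le> B"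
    using U by blast
  show "B \<in> {(\<Sum>P\<in>(pg_points 3 :: (nat \<Rightarrow> 'a) set set). K P) | K.
      \<forall>S\<in>(pg_subspaces 3 1 :: (nat \<Rightarrow> 'a) set set set). (\<Sum>P\<in>S. K P) \<le> w}"
    using L1 L2 by blast
qed

lemma case1: "pg_m TYPE('a) 3 1 (3*t+2) = 15*t+8"
proof (rule pgm_eq)
  show "\<And>K :: (nat \<Rightarrow> 'a) set \<Rightarrow> nat. \<forall>S\<in>(pg_subspaces 3 1 :: (nat \<Rightarrow> 'a) set set set). (\<Sum>P\<in>S. K P) \<le> 3*t+2
      \<Longrightarrow> (\<Sum>P\<in>(pg_points 3 :: (nat \<Rightarrow> 'a) set set). K P) \<le> 15*t+8"
    by (rule ubound[where c=t]) auto
  let ?K = "\<lambda>P::(nat \<Rightarrow> 'a) set. t + (if \<exists>x\<in>P. x 0 \<noteq> 0 then 1 else (0::nat))"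
  have Kpt: "\<And>u. ?K (pt u) = t + (if u 0 \<noteq> 0 then 1 else 0)" by (simp add: pt_eq)
  show "\<forall>S\<in>(pg_subspaces 3 1 :: (nat \<Rightarrow> 'a) set set set). (\<Sum>P\<in>S. ?K P) \<le> 3*t+2"
  proof
    fix S assume "S \<in> (pg_subspaces 3 1 :: (nat \<Rightarrow> 'a) set set set)"
    then obtain a b where ab: "a \<in> VV" "b \<in> VV" "a \<noteq> b" and S: "S = {P \<in> pg_points 3. P \<subseteq> lin_span [a,b]}"
      by (rule sub_cases)
    have "(\<Sum>P\<in>S. ?K P) = ?K (pt a) + ?K (pt b) + ?K (pt (vadd a b))"
      unfolding S by (rule line_sum[OF ab])
    also have "\<dots> \<le> 3*t+2"
      unfolding Kpt vadd_def using two_elems[of "a 0"] two_elems[of "b 0"] one_one by auto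
    finally show "(\<Sum>P\<in>S. ?K P) \<le> 3*t+2" .
  qed
  show "(\<Sum>P\<in>(pg_points 3 :: (nat \<Rightarrow> 'a) set set). ?K P) = 15*t+8"
  proof -
    have "(\<Sum>P\<in>(pg_points 3 :: (nat \<Rightarrow> 'a) set set). ?K P) = (\<Sum>v\<in>(VV :: (nat \<Rightarrow> 'a) set). t + (if v 0 \<noteq> 0 then 1 else 0))"
      unfolding sum_points by (simp only: Kpt)
    also have "\<dots> = 15*t+8" unfolding sum.distrib using card15 sum8 by simp
    finally show ?thesis .
  qed
qed

lemma case2: "pg_m TYPE('a) 3 1 (3*t+3) = 15*t+15"
proof (rule pgm_eq)
  show "\<And>K :: (nat \<Rightarrow> 'a) set \<Rightarrow> nat. \<forall>S\<in>(pg_subspaces 3 1 :: (nat \<Rightarrow> 'a) set set set). (\<Sum>P\<in>S. K P) \<le> 3*t+3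
      \<Longrightarrow> (\<Sum>P\<in>(pg_points 3 :: (nat \<Rightarrow> 'a) set set). K P) \<le> 15*t+15"
    by (rule ubound[where c="t+1"]) auto
  let ?K = "\<lambda>P::(nat \<Rightarrow> 'a) set. t + 1"
  show "\<forall>S\<in>(pg_subspaces 3 1 :: (nat \<Rightarrow> 'a) set set set). (\<Sum>P\<in>S. ?K P) \<le> 3*t+3"
  proof
    fix S assume "S \<in> (pg_subspaces 3 1 :: (nat \<Rightarrow> 'a) set set set)"
    then obtain a b where ab: "a \<in> VV" "b \<in> VV" "a \<noteq> b" and S: "S = {P \<in> pg_points 3. P \<subseteq> lin_span [a,b]}"
      by (rule sub_cases)
    have "(\<Sum>P\<in>S. ?K P) = ?K (pt a) + ?K (pt b) + ?K (pt (vadd a b))"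
      unfolding S by (rule line_sum[OF ab])
    thus "(\<Sum>P\<in>S. ?K P) \<le> 3*t+3" by simp
  qed
  show "(\<Sum>P\<in>(pg_points 3 :: (nat \<Rightarrow> 'a) set set). ?K P) = 15*t+15"
    unfolding sum_points using card15 by simp
qed

lemma case3: "pg_m TYPE('a) 3 1 (3*t+4) = 15*t+16"
proof (rule pgm_eq)
  show "\<And>K :: (nat \<Rightarrow> 'a) set \<Rightarrow> nat. \<forall>S\<in>(pg_subspaces 3 1 :: (nat \<Rightarrow> 'a) set set set). (\<Sum>P\<in>S. K P) \<le> 3*t+4
      \<Longrightarrow> (\<Sum>P\<in>(pg_points 3 :: (nat \<Rightarrow> 'a) set set). K P) \<le> 15*t+16"
    by (rule ubound[where c="t+1"]) auto
  define e :: "nat \<Rightarrow> 'a" where "e = chi {0}"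
  have eV: "e \<in> VV" unfolding e_def VV_chi by auto
  let ?K = "\<lambda>P::(nat \<Rightarrow> 'a) set. t + 1 + (if P = pt e then 1 else (0::nat))"
  show "\<forall>S\<in>(pg_subspaces 3 1 :: (nat \<Rightarrow> 'a) set set set). (\<Sum>P\<in>S. ?K P) \<le> 3*t+4"
  proof
    fix S assume "S \<in> (pg_subspaces 3 1 :: (nat \<Rightarrow> 'a) set set set)"
    then obtain a b where ab: "a \<in> VV" "b \<in> VV" "a \<noteq> b" and S: "S = {P \<in> pg_points 3. P \<subseteq> lin_span [a,b]}"
      by (rule sub_cases)
    have "(\<Sum>P\<in>S. ?K P) = ?K (pt a) + ?K (pt b) + ?K (pt (vadd a b))"
      unfolding S by (rule line_sum[OF ab])
    moreover have "pt a \<noteq> pt b" "pt a \<noteq> pt (vadd a b)" "pt b \<noteq> pt (vadd a b)"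
      using pt_ne ab vadd_VV[OF ab] by metis+
    ultimately show "(\<Sum>P\<in>S. ?K P) \<le> 3*t+4" by auto
  qed
  have "(\<Sum>v\<in>VV. if pt v = pt e then 1 else (0::nat)) = (\<Sum>v\<in>VV. if v = e then 1 else (0::nat))"
    by (rule sum.cong) (use pt_ne eV in auto)
  also have "\<dots> = 1" using eV finVV by simp
  finally have one: "(\<Sum>v\<in>VV. if pt v = pt e then 1 else (0::nat)) = 1" .
  show "(\<Sum>P\<in>(pg_points 3 :: (nat \<Rightarrow> 'a) set set). ?K P) = 15*t+16"
    unfolding sum_points sum.distrib using card15 one by simp
qed

end

theorem mainTheorem3:
  fixes t :: nat
  assumes "card (UNIV :: 'a set) = 2"
  shows "pg_m TYPE('a::{field,finite}) 3 1 (3*t+2) = 15*t+8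
       \<and> pg_m TYPE('a) 3 1 (3*t+3) = 15*t+15
       \<and> pg_m TYPE('a) 3 1 (3*t+4) = 15*t+16"
  using case1[OF assms] case2[OF assms] case3[OF assms] by blast

end
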